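(* Let $\mathrm F=(W,\bm{\Box})$ be a monotonic and transitive neighborhood frame. Then its rm-closure $\mathrm F^{\bullet}=(W,\bm{\Box}^{\bullet})$ is transitive: $\bm{\Box}^{\bullet}X\subseteq\bm{\Box}^{\bullet}\bm{\Box}^{\bullet}X$ for all $X\subseteq W$.
   Context: A neighborhood frame is $(W,\bm{\Box})$ with $W\neq\varnothing$ and $\bm{\Box}:\mathcal P(W)\to\mathcal P(W)$. It is monotonic if $X\subseteq Y$ implies $\bm{\Box}X\subseteq\bm{\Box}Y$, and transitive if $\bm{\Box}X\subseteq\bm{\Box}\bm{\Box}X$ for all $X$. The supplementation of a function $\bm{\Box}'$ is $\bm{\Box}'^{\#}X=\bigcup\{\bm{\Box}'Y:Y\subseteq X\}$; the intersection closure is $\bm{\Box}'^{*}X=\bigcup\{\bm{\Box}'X_1\cap\dots\cap\bm{\Box}'X_n:n\ge1,\ X=X_1\cap\dots\cap X_n\}$. The rm-closure is $\bm{\Box}^{\bullet}=\bm{\Box}^{*\#}$ (the supplementation of the intersection closure of $\bm{\Box}$), which equals $\bm{\Box}^{\#*}$. *)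

theory Defs
  imports Main
begin

(* A neighborhood frame (W, Box) is represented by a type 'a (playing the role of W,
   automatically nonempty) and a function Box :: 'a set => 'a set on P(W). *)

definition monotonic_nf :: "('a set \<Rightarrow> 'a set) \<Rightarrow> bool" where
  "monotonic_nf B \<longleftrightarrow> (\<forall>X Y. X \<subseteq> Y \<longrightarrow> B X \<subseteq> B Y)"

definition transitive_nf :: "('a set \<Rightarrow> 'a set) \<Rightarrow> bool" where
  "transitive_nf B \<longleftrightarrow> (\<forall>X. B X \<subseteq> B (B X))"

definition suppl :: "('a set \<Rightarrow> 'a set) \<Rightarrow> 'a set \<Rightarrow> 'a set" where
  "suppl B X = \<Union>{B Y | Y. Y \<subseteq> X}"

(* intersection closure: B* X = \<Union>{B X1 \<inter> ... \<inter> B Xn | n \<ge> 1, X = X1 \<inter> ... \<inter> Xn};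
   the finite family X1,...,Xn is represented by a nonempty list *)
definition icl :: "('a set \<Rightarrow> 'a set) \<Rightarrow> 'a set \<Rightarrow> 'a set" where
  "icl B X = \<Union>{\<Inter>(B ` set Xs) | Xs. Xs \<noteq> [] \<and> X = \<Inter>(set Xs)}"

definition rm_closure :: "('a set \<Rightarrow> 'a set) \<Rightarrow> 'a set \<Rightarrow> 'a set" where
  "rm_closure B = suppl (icl B)"

end

theory Submission
  imports Defs
begin

lemma rm_char:
  "x \<in> rm_closure B X \<longleftrightarrow> (\<exists>Xs. Xs \<noteq> [] \<and> \<Inter>(set Xs) \<subseteq> X \<and> (\<forall>Y\<in>set Xs. x \<in> B Y))"
  unfolding rm_closure_def suppl_def icl_def by blast

theorem mainTheorem11:
  fixes B :: "'a set \<Rightarrow> 'a set"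
  assumes "monotonic_nf B" and "transitive_nf B"
  shows "transitive_nf (rm_closure B)"
  unfolding transitive_nf_def
proof (intro allI subsetI)
  fix X x
  assume "x \<in> rm_closure B X"
  then obtain Xs where Xs: "Xs \<noteq> []" "\<Inter>(set Xs) \<subseteq> X" "\<forall>Y\<in>set Xs. x \<in> B Y"
    using rm_char by metis
  have sub: "\<Inter>(set (map B Xs)) \<subseteq> rm_closure B X"
  proof
    fix y assume "y \<in> \<Inter>(set (map B Xs))"
    then show "y \<in> rm_closure B X" using Xs(1,2) rm_char[of y B X] by auto
  qed
  have "\<forall>Y\<in>set (map B Xs). x \<in> B Y"
    using Xs(3) assms(2) unfolding transitive_nf_def by auto
  then show "x \<in> rm_closure B (rm_closure B X)"
    using rm_char[of x B "rm_closure B X"] sub Xs(1) by (metis Nil_is_map_conv)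
qed

end
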